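(* Let $d=d(n)$ satisfy $12 \le d \le e^{\sqrt[3]{\log n}}$ and let $m = \frac{\log n \,\log\log\log n}{\log d\, \log\log n}$. If $p=p(n) \ge (8d+12)\frac{\log n}{n}$, then for all sufficiently large $n$, the probability that $G(n,p)$ contains a vertex set $S$ with $2 \le |S| \le \frac{n}{dm}$ and $|N(S)| < d|S|$ is at most $e^{-\frac32 pn}$.
   Context: $G(n,p)$ is the Erdős–Rényi random graph on a vertex set $V$ of size $n$ in which each pair of vertices is an edge independently with probability $p$; $\log$ is the natural logarithm. For $S\subseteq V$, the external neighbourhood $N(S)$ is the set of vertices $v \in V\setminus S$ adjacent to some vertex of $S$. *)

theory Defs
  imports Complex_Main
begin

text \<open>Vertex set V = {0..<n}. A graph is a set of edges, each edge a 2-element subset of V.\<close>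

definition all_pairs :: "nat \<Rightarrow> nat set set" where
  "all_pairs n = {e. \<exists>u v. u < n \<and> v < n \<and> u \<noteq> v \<and> e = {u, v}}"

text \<open>Probability that the Erdos-Renyi random graph G(n,p) has property P:
  each of the possible edges is present independently with probability p.\<close>

definition gnp_prob :: "nat \<Rightarrow> real \<Rightarrow> (nat set set \<Rightarrow> bool) \<Rightarrow> real" where
  "gnp_prob n p P =
     (\<Sum>E \<in> Pow (all_pairs n).
        if P E then p ^ card E * (1 - p) ^ (card (all_pairs n) - card E) else 0)"

definition ext_nbhd :: "nat \<Rightarrow> nat set set \<Rightarrow> nat set \<Rightarrow> nat set" where
  "ext_nbhd n E S = {v \<in> {..<n} - S. \<exists>u \<in> S. {u, v} \<in> E}"

end

theory Submission
  imports Defs "HOL-Real_Asymp.Real_Asymp"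
begin

lemma sum_pow_binom:
  fixes x y :: real
  assumes "finite R"
  shows "(\<Sum>E\<in>Pow R. x ^ card E * y ^ (card R - card E)) = (x + y) ^ card R"
  using assms
proof (induction R rule: finite_induct)
  case empty
  then show ?case by simp
next
  case (insert a R)
  have fin: "finite (Pow R)" using insert by simp
  have inj: "inj_on (insert a) (Pow R)"
  proof (rule inj_onI)
    fix X Y assume "X \<in> Pow R" "Y \<in> Pow R" "insert a X = insert a Y"
    then show "X = Y" using insert(2) insert_ident by (metis PowD subsetD)
  qed
  have disj: "Pow R \<inter> insert a ` Pow R = {}" using insert(2) by auto
  have cE: "\<And>E. E \<in> Pow R \<Longrightarrow> card E \<le> card R" using insert(1)
    by (simp add: card_mono)
  have "(\<Sum>E\<in>Pow (insert a R). x ^ card E * y ^ (card (insert a R) - card E))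
      = (\<Sum>E\<in>Pow R. x ^ card E * y ^ (Suc (card R) - card E))
        + (\<Sum>E\<in>insert a ` Pow R. x ^ card E * y ^ (Suc (card R) - card E))"
    unfolding Pow_insert using insert fin disj
    by (simp add: sum.union_disjoint)
  also have "(\<Sum>E\<in>Pow R. x ^ card E * y ^ (Suc (card R) - card E))
      = y * (\<Sum>E\<in>Pow R. x ^ card E * y ^ (card R - card E))"
    unfolding sum_distrib_left
    by (rule sum.cong) (auto simp: Suc_diff_le cE)
  also have "(\<Sum>E\<in>insert a ` Pow R. x ^ card E * y ^ (Suc (card R) - card E))
      = (\<Sum>E\<in>Pow R. x ^ card (insert a E) * y ^ (Suc (card R) - card (insert a E)))"
    by (rule sum.reindex[OF inj, unfolded comp_def])
  also have "\<dots> = x * (\<Sum>E\<in>Pow R. x ^ card E * y ^ (card R - card E))"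
    unfolding sum_distrib_left
  proof (rule sum.cong)
    fix E assume "E \<in> Pow R"
    then have "finite E" "a \<notin> E" using insert finite_subset by auto
    then show "x ^ card (insert a E) * y ^ (Suc (card R) - card (insert a E)) =
        x * (x ^ card E * y ^ (card R - card E))" by simp
  qed simp
  finally show ?case using insert by (simp add: algebra_simps)
qed

lemma finite_all_pairs: "finite (all_pairs n)"
proof -
  have "all_pairs n \<subseteq> Pow {..<n}" unfolding all_pairs_def by auto
  then show ?thesis by (rule finite_subset) simp
qed

lemma gnp_mono:
  assumes "0 \<le> p" "p \<le> 1" "\<And>E. E \<subseteq> all_pairs n \<Longrightarrow> P E \<Longrightarrow> Q E"
  shows "gnp_prob n p P \<le> gnp_prob n p Q"
  unfolding gnp_prob_def
  by (rule sum_mono) (use assms in auto)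

lemma gnp_union:
  fixes Q :: "'i \<Rightarrow> nat set set \<Rightarrow> bool"
  assumes "0 \<le> p" "p \<le> 1" "finite I"
  shows "gnp_prob n p (\<lambda>E. \<exists>i\<in>I. Q i E) \<le> (\<Sum>i\<in>I. gnp_prob n p (Q i))"
proof -
  let ?w = "\<lambda>E. p ^ card E * (1 - p) ^ (card (all_pairs n) - card E)"
  have "gnp_prob n p (\<lambda>E. \<exists>i\<in>I. Q i E) \<le> (\<Sum>E \<in> Pow (all_pairs n). \<Sum>i\<in>I. if Q i E then ?w E else 0)"
    unfolding gnp_prob_def
  proof (rule sum_mono)
    fix E :: "nat set set"
    have w0: "?w E \<ge> 0" using assms by simp
    show "(if \<exists>i\<in>I. Q i E then ?w E else 0) \<le> (\<Sum>i\<in>I. if Q i E then ?w E else 0)"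
    proof (cases "\<exists>i\<in>I. Q i E")
      case True
      then obtain i where i: "i \<in> I" "Q i E" by blast
      have "(if Q i E then ?w E else 0) \<le> (\<Sum>i\<in>I. if Q i E then ?w E else 0)"
        by (rule member_le_sum) (use i assms w0 in auto)
      then show ?thesis using True i by simp
    next
      case False
      then show ?thesis using w0 by (simp add: sum_nonneg)
    qed
  qed
  also have "\<dots> = (\<Sum>i\<in>I. gnp_prob n p (Q i))"
    unfolding gnp_prob_def by (rule sum.swap)
  finally show ?thesis .
qed

lemma gnp_avoid:
  assumes "F \<subseteq> all_pairs n"
  shows "gnp_prob n p (\<lambda>E. E \<inter> F = {}) = (1 - p) ^ card F"
proof -
  let ?A = "all_pairs n"
  have finA: "finite ?A" by (rule finite_all_pairs)
  have finF: "finite F" using assms finA finite_subset by blast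
  have cA: "card ?A = card (?A - F) + card F"
    using assms finA finF by (metis card_Diff_subset card_mono le_add_diff_inverse2)
  have "gnp_prob n p (\<lambda>E. E \<inter> F = {}) = (\<Sum>E \<in> {E \<in> Pow ?A. E \<inter> F = {}}. p ^ card E * (1 - p) ^ (card ?A - card E))"
    unfolding gnp_prob_def by (rule sum.mono_neutral_cong_right) (use finA in auto)
  also have "{E \<in> Pow ?A. E \<inter> F = {}} = Pow (?A - F)" by auto
  also have "(\<Sum>E \<in> Pow (?A - F). p ^ card E * (1 - p) ^ (card ?A - card E))
     = (\<Sum>E \<in> Pow (?A - F). (1-p) ^ card F * (p ^ card E * (1 - p) ^ (card (?A - F) - card E)))"
  proof (rule sum.cong)
    fix E assume "E \<in> Pow (?A - F)"
    then have "card E \<le> card (?A - F)" using finA by (simp add: card_mono)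
    then have "card ?A - card E = card F + (card (?A - F) - card E)" using cA by simp
    then show "p ^ card E * (1 - p) ^ (card ?A - card E) = (1-p) ^ card F * (p ^ card E * (1 - p) ^ (card (?A - F) - card E))"
      by (simp add: power_add)
  qed simp
  also have "\<dots> = (1-p) ^ card F * (p + (1 - p)) ^ card (?A - F)"
    by (simp add: sum_distrib_left[symmetric] sum_pow_binom finA)
  finally show ?thesis by simp
qed

lemma count_small_subsets:
  "card {T. T \<subseteq> {..<n} \<and> card T \<le> k} \<le> (n + 1) ^ k"
proof (induction k)
  case 0
  have "{T. T \<subseteq> {..<n} \<and> card T \<le> 0} = {{}}"
    by (auto dest: finite_subset)
  then show ?case by simp
next
  case (Suc k)
  have sub: "{T. T \<subseteq> {..<n} \<and> card T \<le> Suc k} \<subseteq>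
     {{}} \<union> (\<lambda>(x, T'). insert x T') ` ({..<n} \<times> {T. T \<subseteq> {..<n} \<and> card T \<le> k})"
  proof
    fix T assume T: "T \<in> {T. T \<subseteq> {..<n} \<and> card T \<le> Suc k}"
    show "T \<in> {{}} \<union> (\<lambda>(x, T'). insert x T') ` ({..<n} \<times> {T. T \<subseteq> {..<n} \<and> card T \<le> k})"
    proof (cases "T = {}")
      case False
      then obtain x where x: "x \<in> T" by blast
      have fT: "finite T" using T finite_subset by auto
      have "card (T - {x}) = card T - 1" using x fT by (simp add: card_Diff_singleton)
      moreover have "card T \<le> Suc k" using T by simp
      ultimately have "card (T - {x}) \<le> k" by linarith
      moreover have "T = insert x (T - {x})" using x by auto
      ultimately show ?thesis using T x by (auto intro!: image_eqI[where x="(x, T - {x})"])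
    qed simp
  qed
  have fin: "finite {T. T \<subseteq> {..<n} \<and> card T \<le> k}" by simp
  have "card {T. T \<subseteq> {..<n} \<and> card T \<le> Suc k} \<le>
     card ({{}} \<union> (\<lambda>(x, T'). insert x T') ` ({..<n} \<times> {T. T \<subseteq> {..<n} \<and> card T \<le> k}))"
    by (rule card_mono[OF _ sub]) (simp add: fin)
  also have "\<dots> \<le> 1 + card ((\<lambda>(x, T'). insert x T') ` ({..<n} \<times> {T. T \<subseteq> {..<n} \<and> card T \<le> k}))"
    using card_Un_le[of "{{}}"] by simp
  also have "\<dots> \<le> 1 + card ({..<n} \<times> {T. T \<subseteq> {..<n} \<and> card T \<le> k})"
    using card_image_le[of "{..<n} \<times> {T. T \<subseteq> {..<n} \<and> card T \<le> k}" "\<lambda>(x, T'). insert x T'"] fin by simp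
  also have "\<dots> = 1 + n * card {T. T \<subseteq> {..<n} \<and> card T \<le> k}"
    by (simp add: card_cartesian_product)
  also have "\<dots> \<le> 1 + n * (n + 1) ^ k" using Suc by simp
  also have "\<dots> \<le> (n + 1) ^ Suc k"
  proof -
    have "1 \<le> (n + 1) ^ k" by simp
    then show ?thesis by (simp add: algebra_simps)
  qed
  finally show ?case .
qed

lemma card_pairs:
  assumes "S \<inter> W = {}"
  shows "card {{u, v} | u v. u \<in> S \<and> v \<in> W} = card S * card W"
proof -
  have eq: "{{u, v} | u v. u \<in> S \<and> v \<in> W} = (\<lambda>(u, v). {u, v}) ` (S \<times> W)" by auto
  have "inj_on (\<lambda>(u, v). {u, v}) (S \<times> W)"
    using assms by (auto simp: inj_on_def doubleton_eq_iff)
  then show ?thesis unfolding eq by (simp add: card_image card_cartesian_product)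
qed


lemma per_S_bound:
  fixes d p m :: real and n :: nat and S :: "nat set"
  assumes d12: "12 \<le> d" and p0: "0 \<le> p" and p1: "p \<le> 1"
    and pbig: "(8 * d + 12) * ln (real n) / real n \<le> p"
    and m18: "18 \<le> m" and n4: "4 \<le> n"
    and SV: "S \<subseteq> {..<n}" and s2: "2 \<le> card S" and sle: "real (card S) \<le> real n / (d * m)"
  shows "(\<Sum>T\<in>{T. T \<subseteq> {..<n} - S \<and> real (card T) < d * real (card S)}.
            (1 - p) ^ (card S * card ({..<n} - S - T)))
         \<le> exp (- (3 / 2) * p * real n) * (1 / real n) ^ card S / 3"
proof -
  define s where "s = real (card S)"
  define P where "P = p * real n"
  define L where "L = ln (real n)"
  define L1 where "L1 = ln (real n + 1)"
  define V where "V = {..<n}"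
  define Ts where "Ts = {T. T \<subseteq> V - S \<and> real (card T) < d * s}"
  define k where "k = nat \<lfloor>d * s\<rfloor>"
  have npos: "real n > 0" using n4 by simp
  have s2r: "2 \<le> s" using s2 unfolding s_def by simp
  have dm: "d * m > 0" using d12 m18 by simp
  have sdm: "s * (d * m) \<le> real n" using sle dm unfolding s_def by (simp add: pos_le_divide_eq)
  have "(s * d) * 18 \<le> (s * d) * m"
    using m18 d12 s2r by (intro mult_left_mono) auto
  then have sd: "18 * (s * d) \<le> real n" using sdm by (simp add: algebra_simps)
  have "s \<le> s * d / 12" using d12 s2r by (simp add: field_simps)
  then have s1d: "s + s * d \<le> real n / 16" using sd by linarith
  have L4: "ln 4 \<le> L" unfolding L_def using n4 by simp
  have L0: "0 \<le> L" unfolding L_def using n4 by simp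
  have L3: "ln 3 \<le> L" unfolding L_def using n4 by simp
  have P_ge: "(8 * d + 12) * L \<le> P"
    using pbig npos unfolding P_def L_def by (simp add: pos_divide_le_eq)
  have P0: "0 \<le> P" unfolding P_def using p0 by simp
  have L1L: "L1 \<le> (3/2) * L"
  proof -
    have "(real n + 1) ^ 2 \<le> real n ^ 3"
    proof -
      have "(real n + 1) ^ 2 \<le> real n * real n + 2 * real n + 1" by (simp add: power2_eq_square algebra_simps)
      also have "\<dots> \<le> real n * real n * real n"
      proof -
        have "4 * (real n * real n) \<le> real n * (real n * real n)"
          using n4 by (intro mult_right_mono) auto
        moreover have "2 * real n + 1 \<le> 3 * (real n * real n)"
        proof -
          have "real n * 1 \<le> real n * real n" using n4 by (intro mult_left_mono) auto
          then show ?thesis using n4 by linarith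
        qed
        ultimately show ?thesis by (simp add: algebra_simps)
      qed
      finally show ?thesis by (simp add: power3_eq_cube)
    qed
    then have "ln ((real n + 1) ^ 2) \<le> ln (real n ^ 3)" using npos by simp
    then have "2 * L1 \<le> 3 * L" unfolding L1_def L_def using npos by (simp add: ln_realpow)
    then show ?thesis by simp
  qed
  have hterm: "(1 - p) ^ (card S * card (V - S - T)) \<le> exp (- (15/16) * (P * s))" if T: "T \<in> Ts" for T
  proof -
    have TV: "T \<subseteq> V - S" and Tc: "real (card T) < d * s" using T unfolding Ts_def by auto
    have fV: "finite V" unfolding V_def by simp
    have fS: "finite S" using SV finite_subset by blast
    have fT: "finite T" using TV fV finite_subset by blast
    have STV: "S \<union> T \<subseteq> V" using SV TV unfolding V_def by auto
    have cST: "card (S \<union> T) = card S + card T" using TV fS fT by (subst card_Un_disjoint) auto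
    have "V - S - T = V - (S \<union> T)" by auto
    then have cW: "card (V - S - T) = n - (card S + card T)"
      using card_Diff_subset[OF finite_subset[OF STV fV] STV] cST unfolding V_def by simp
    have "card S + card T \<le> n" using card_mono[OF fV STV] cST unfolding V_def by simp
    then have wr: "real (card (V - S - T)) = real n - s - real (card T)"
      using cW unfolding s_def by (simp add: of_nat_diff)
    have sdT: "s + real (card T) \<le> real n / 16" using Tc s1d mult.commute[of d s] by linarith
    have w15: "(15/16) * real n \<le> real (card (V - S - T))" using wr sdT by linarith
    have "(1 - p) ^ (card S * card (V - S - T)) \<le> exp (- p) ^ (card S * card (V - S - T))"
      using p1 by (intro power_mono) (use exp_ge_add_one_self[of "-p"] in auto)
    also have "\<dots> = exp (real (card S * card (V - S - T)) * (- p))"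
      by (rule exp_of_nat_mult[symmetric])
    also have "\<dots> \<le> exp (- (15/16) * (P * s))"
    proof -
      have "s * ((15/16) * real n) \<le> s * real (card (V - S - T))"
        using w15 s2r by (intro mult_left_mono) auto
      then have "p * (s * ((15/16) * real n)) \<le> p * (s * real (card (V - S - T)))"
        using p0 by (rule mult_left_mono)
      then show ?thesis unfolding P_def s_def by (simp add: algebra_simps)
    qed
    finally show ?thesis .
  qed
  have finTs: "finite Ts" unfolding Ts_def V_def
    by (rule finite_subset[of _ "Pow {..<n}"]) auto
  have Tsub: "Ts \<subseteq> {T. T \<subseteq> {..<n} \<and> card T \<le> k}"
  proof
    fix T assume "T \<in> Ts"
    then have TV: "T \<subseteq> V - S" and Tc: "real (card T) < d * s" unfolding Ts_def by auto
    have "int (card T) \<le> \<lfloor>d * s\<rfloor>" using Tc by (simp add: le_floor_iff)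
    then have "card T \<le> k" unfolding k_def by linarith
    then show "T \<in> {T. T \<subseteq> {..<n} \<and> card T \<le> k}" using TV unfolding V_def by auto
  qed
  have cTs: "real (card Ts) \<le> (real n + 1) ^ k"
  proof -
    have "card Ts \<le> card {T. T \<subseteq> {..<n} \<and> card T \<le> k}" by (rule card_mono[OF _ Tsub]) simp
    also have "\<dots> \<le> (n + 1) ^ k" by (rule count_small_subsets)
    finally have "card Ts \<le> (n + 1) ^ k" .
    then have "real (card Ts) \<le> real ((n + 1) ^ k)" by linarith
    then show ?thesis by (simp add: add.commute)
  qed
  have kds: "real k \<le> d * s"
  proof -
    have "0 \<le> d * s" using d12 s2r by simp
    then show ?thesis unfolding k_def by linarith
  qed
  have pow_exp: "(real n + 1) ^ k \<le> exp (d * s * L1)"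
  proof -
    have "(real n + 1) ^ k = exp (real k * L1)" unfolding L1_def
      using npos by (simp add: exp_of_nat_mult exp_ln[symmetric])
    also have "\<dots> \<le> exp (d * s * L1)"
    proof -
      have "0 \<le> L1" unfolding L1_def by simp
      then show ?thesis using kds by (simp add: mult_right_mono)
    qed
    finally show ?thesis .
  qed
  have "(\<Sum>T\<in>Ts. (1 - p) ^ (card S * card (V - S - T))) \<le> real (card Ts) * exp (- (15/16) * (P * s))"
    by (rule sum_bounded_above) (rule hterm)
  also have "\<dots> \<le> exp (d * s * L1) * exp (- (15/16) * (P * s))"
    using cTs pow_exp by (intro mult_right_mono) auto
  also have "\<dots> = exp (d * s * L1 - (15/16) * (P * s))" by (simp add: exp_add[symmetric])
  also have "\<dots> \<le> exp (- (3/2) * P - s * L - ln 3)"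
  proof -
    have e1: "P * ((15/16) * s - 3/2) = (15/16) * (P * s) - (3/2) * P" by (simp add: algebra_simps)
    have h1: "(3/16) * (P * s) \<le> P * ((15/16) * s - 3/2)"
    proof -
      have "P * ((3/16) * s) \<le> P * ((15/16) * s - 3/2)" using P0 s2r by (intro mult_left_mono) auto
      then show ?thesis by (simp add: algebra_simps)
    qed
    have h2: "(3/2) * (d * s * L) + (9/4) * (s * L) \<le> (3/16) * (P * s)"
    proof -
      have "(8 * d + 12) * L * s \<le> P * s" using P_ge s2r by (intro mult_right_mono) auto
      then show ?thesis by (simp add: algebra_simps)
    qed
    have h3: "d * s * L1 \<le> (3/2) * (d * s * L)"
    proof -
      have "d * s * L1 \<le> d * s * ((3/2) * L)" using L1L d12 s2r by (intro mult_left_mono) auto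
      then show ?thesis by (simp add: algebra_simps)
    qed
    have h4: "ln 3 \<le> s * L"
    proof -
      have "1 * L \<le> s * L" using s2r L0 by (intro mult_right_mono) auto
      then show ?thesis using L3 by simp
    qed
    have "0 \<le> s * L" using s2r L0 by simp
    then have "d * s * L1 - (15/16) * (P * s) \<le> - (3/2) * P - s * L - ln 3"
      using e1 h1 h2 h3 h4 by linarith
    then show ?thesis by simp
  qed
  also have "\<dots> = exp (- (3 / 2) * p * real n) * (1 / real n) ^ card S / 3"
  proof -
    have a0: "exp (real (card S) * ln (real n)) = real n ^ card S"
      using npos by (simp add: exp_of_nat_mult)
    have a: "(1 / real n) ^ card S = exp (- s * L)"
      unfolding s_def L_def using a0 by (simp add: exp_minus power_one_over divide_inverse power_inverse)
    have b: "exp (- ln 3) = 1 / (3::real)" by (simp add: exp_minus)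
    have "exp (- (3/2) * P - s * L - ln 3) = exp (- (3/2) * P) * exp (- s * L) * exp (- ln 3)"
      by (simp add: exp_add[symmetric] exp_diff)
    then show ?thesis unfolding a b P_def by (simp add: algebra_simps)
  qed
  finally show ?thesis unfolding Ts_def V_def s_def .
qed


lemma main_n:
  fixes d p m :: real and n :: nat
  assumes d12: "12 \<le> d" and dexp: "d \<le> exp (root 3 (ln (real n)))"
    and p0: "0 \<le> p" and p1: "p \<le> 1"
    and pbig: "(8 * d + 12) * ln (real n) / real n \<le> p"
    and asym: "18 \<le> ln (real n) * ln (ln (ln (real n))) / (root 3 (ln (real n)) * ln (ln (real n)))"
    and l3: "0 < ln (ln (ln (real n)))" and l2: "0 < ln (ln (real n))" and n4: "4 \<le> n"
    and m_def: "m = ln (real n) * ln (ln (ln (real n))) / (ln d * ln (ln (real n)))"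
  shows "gnp_prob n p (\<lambda>E. \<exists>S \<subseteq> {..<n}. 2 \<le> card S \<and> real (card S) \<le> real n / (d * m)
              \<and> real (card (ext_nbhd n E S)) < d * real (card S))
     \<le> exp (- (3 / 2) * p * real n)"
proof -
  have m18: "18 \<le> m"
  proof -
    have lnd0: "0 < ln d" using d12 by simp
    have lndr: "ln d \<le> root 3 (ln (real n))"
    proof -
      have "ln d \<le> ln (exp (root 3 (ln (real n))))"
        using dexp d12 by (subst ln_le_cancel_iff) auto
      then show ?thesis by simp
    qed
    have X0: "0 \<le> ln (real n) * ln (ln (ln (real n)))" using l3 n4 by simp
    have "ln d * ln (ln (real n)) \<le> root 3 (ln (real n)) * ln (ln (real n))"
      using lndr l2 by (intro mult_right_mono) auto
    moreover have "0 < root 3 (ln (real n)) * ln (ln (real n)) * (ln d * ln (ln (real n)))"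
    proof -
      have r0: "0 < root 3 (ln (real n))" using lnd0 lndr by linarith
      show ?thesis by (intro mult_pos_pos r0 lnd0 l2)
    qed
    ultimately have "ln (real n) * ln (ln (ln (real n))) / (root 3 (ln (real n)) * ln (ln (real n)))
        \<le> ln (real n) * ln (ln (ln (real n))) / (ln d * ln (ln (real n)))"
      using X0 by (intro divide_left_mono) auto
    then show ?thesis using asym m_def by simp
  qed
  define V where "V = {..<n}"
  define SS where "SS = {S. S \<subseteq> V \<and> 2 \<le> card S \<and> real (card S) \<le> real n / (d * m)}"
  define Ts where "Ts = (\<lambda>S. {T. T \<subseteq> V - S \<and> real (card T) < d * real (card S)})"
  define F where "F = (\<lambda>S T. {{u, v} | u v. u \<in> S \<and> v \<in> V - S - T})"
  define I where "I = Sigma SS Ts"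
  have finV: "finite V" unfolding V_def by simp
  have finSS: "finite SS" unfolding SS_def by (rule finite_subset[of _ "Pow V"]) (use finV in auto)
  have finTs: "finite (Ts S)" for S unfolding Ts_def by (rule finite_subset[of _ "Pow V"]) (use finV in auto)
  have finI: "finite I" unfolding I_def using finSS finTs by simp
  have Fsub: "F S T \<subseteq> all_pairs n" if "S \<subseteq> V" for S T
    using that unfolding F_def all_pairs_def V_def by blast
  have step1: "gnp_prob n p (\<lambda>E. \<exists>S \<subseteq> {..<n}. 2 \<le> card S \<and> real (card S) \<le> real n / (d * m)
              \<and> real (card (ext_nbhd n E S)) < d * real (card S))
     \<le> gnp_prob n p (\<lambda>E. \<exists>i\<in>I. (case i of (S, T) \<Rightarrow> E \<inter> F S T = {}))"
  proof (rule gnp_mono[OF p0 p1])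
    fix E assume "\<exists>S \<subseteq> {..<n}. 2 \<le> card S \<and> real (card S) \<le> real n / (d * m)
              \<and> real (card (ext_nbhd n E S)) < d * real (card S)"
    then obtain S where S: "S \<subseteq> V" "2 \<le> card S" "real (card S) \<le> real n / (d * m)"
      "real (card (ext_nbhd n E S)) < d * real (card S)" unfolding V_def by blast
    define T where "T = ext_nbhd n E S"
    have "T \<subseteq> V - S" unfolding T_def ext_nbhd_def V_def by auto
    then have "(S, T) \<in> I" unfolding I_def SS_def Ts_def using S T_def by auto
    moreover have "E \<inter> F S T = {}"
    proof (rule ccontr)
      assume "E \<inter> F S T \<noteq> {}"
      then obtain u v where uv: "{u, v} \<in> E" "u \<in> S" "v \<in> V - S - T" unfolding F_def by blast
      then have "v \<in> T" unfolding T_def ext_nbhd_def V_def by auto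
      then show False using uv by auto
    qed
    ultimately show "\<exists>i\<in>I. (case i of (S, T) \<Rightarrow> E \<inter> F S T = {})" by auto
  qed
  also have "\<dots> \<le> (\<Sum>i\<in>I. gnp_prob n p (\<lambda>E. case i of (S, T) \<Rightarrow> E \<inter> F S T = {}))"
    by (rule gnp_union[OF p0 p1 finI])
  also have "\<dots> = (\<Sum>i\<in>I. case i of (S, T) \<Rightarrow> (1 - p) ^ (card S * card (V - S - T)))"
  proof (rule sum.cong)
    fix i assume "i \<in> I"
    then obtain S T where i: "i = (S, T)" "S \<in> SS" "T \<in> Ts S" unfolding I_def by auto
    have SV: "S \<subseteq> V" using i unfolding SS_def by auto
    have "gnp_prob n p (\<lambda>E. E \<inter> F S T = {}) = (1 - p) ^ card (F S T)"
      by (rule gnp_avoid[OF Fsub[OF SV]])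
    also have "card (F S T) = card S * card (V - S - T)"
      unfolding F_def by (rule card_pairs) auto
    finally show "gnp_prob n p (\<lambda>E. case i of (S, T) \<Rightarrow> E \<inter> F S T = {}) =
       (case i of (S, T) \<Rightarrow> (1 - p) ^ (card S * card (V - S - T)))" using i by simp
  qed simp
  also have "\<dots> = (\<Sum>S\<in>SS. \<Sum>T\<in>Ts S. (1 - p) ^ (card S * card (V - S - T)))"
    unfolding I_def by (rule sum.Sigma[symmetric]) (use finSS finTs in auto)
  also have "\<dots> \<le> (\<Sum>S\<in>SS. exp (- (3 / 2) * p * real n) * (1 / real n) ^ card S / 3)"
  proof (rule sum_mono)
    fix S assume "S \<in> SS"
    then have S: "S \<subseteq> {..<n}" "2 \<le> card S" "real (card S) \<le> real n / (d * m)"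
      unfolding SS_def V_def by auto
    show "(\<Sum>T\<in>Ts S. (1 - p) ^ (card S * card (V - S - T))) \<le> exp (- (3 / 2) * p * real n) * (1 / real n) ^ card S / 3"
      unfolding Ts_def V_def
      by (rule per_S_bound[OF d12 p0 p1 pbig m18 n4 S])
  qed
  also have "\<dots> \<le> (\<Sum>S\<in>Pow V. exp (- (3 / 2) * p * real n) * (1 / real n) ^ card S / 3)"
    by (rule sum_mono2) (use finV in \<open>auto simp: SS_def\<close>)
  also have "\<dots> = exp (- (3 / 2) * p * real n) / 3 * (\<Sum>S\<in>Pow V. (1 / real n) ^ card S * 1 ^ (card V - card S))"
    by (simp add: sum_distrib_left)
  also have "\<dots> = exp (- (3 / 2) * p * real n) / 3 * (1 / real n + 1) ^ n"
    using sum_pow_binom[OF finV, of "1 / real n" 1] unfolding V_def by simp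
  also have "\<dots> \<le> exp (- (3 / 2) * p * real n) / 3 * 3"
  proof -
    have "(1 / real n + 1) ^ n \<le> exp (1 / real n) ^ n"
      using exp_ge_add_one_self[of "1 / real n"] by (intro power_mono) (auto simp: add.commute)
    also have "\<dots> = exp (real n * (1 / real n))" by (rule exp_of_nat_mult[symmetric])
    also have "\<dots> = exp 1" using n4 by simp
    also have "\<dots> \<le> 3" by (rule exp_le)
    finally show ?thesis by (intro mult_left_mono) auto
  qed
  also have "\<dots> = exp (- (3 / 2) * p * real n)" by simp
  finally show ?thesis .
qed

theorem lemma17:
  fixes d p :: "nat \<Rightarrow> real"
  assumes "\<forall>\<^sub>F n in sequentially. 12 \<le> d n \<and> d n \<le> exp (root 3 (ln (real n)))"
    and "\<forall>\<^sub>F n in sequentially. 0 \<le> p n \<and> p n \<le> 1"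
    and "\<forall>\<^sub>F n in sequentially. p n \<ge> (8 * d n + 12) * ln (real n) / real n"
  shows "\<forall>\<^sub>F n in sequentially.
    (let m = ln (real n) * ln (ln (ln (real n))) / (ln (d n) * ln (ln (real n))) in
     gnp_prob n (p n)
       (\<lambda>E. \<exists>S \<subseteq> {..<n}. 2 \<le> card S \<and> real (card S) \<le> real n / (d n * m)
              \<and> real (card (ext_nbhd n E S)) < d n * real (card S))
     \<le> exp (- (3 / 2) * p n * real n))"
proof -
  have e1: "\<forall>\<^sub>F n in sequentially. (18::real) \<le> ln (real n) * ln (ln (ln (real n))) / (root 3 (ln (real n)) * ln (ln (real n)))"
    by real_asymp
  have e2: "\<forall>\<^sub>F n in sequentially. (0::real) < ln (ln (ln (real n)))"
    by real_asymp
  have e3: "\<forall>\<^sub>F n in sequentially. (0::real) < ln (ln (real n))"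
    by real_asymp
  have e4: "\<forall>\<^sub>F n in sequentially. (4::nat) \<le> n"
    by (rule eventually_ge_at_top)
  from assms e1 e2 e3 e4 show ?thesis
  proof eventually_elim
    case (elim n)
    show ?case unfolding Let_def
      by (rule main_n) (use elim in simp_all)
  qed
qed

end
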